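(* Let $n=n_1+\dots+n_k$ be a partition into positive integers, let $L=U(n_1)\times\cdots\times U(n_k)$ be the natural block-diagonal subgroup of $G=U(n)$, and let $G'=O(n)$. Let $J=\mathrm{diag}(J_1,\dots,J_k)\in M(n,\mathbb{R})$ be block diagonal with $J_i\in M(n_i,\mathbb{R})$, and let $G_J:=\{g\in G:gJ=Jg\}$. Suppose there exist a skew-Hermitian matrix $X\in\mathfrak{u}(n)$ and a sequence $i_0,i_1,\dots,i_l\in\{1,\dots,k\}$ ($l\ge 2$) with $i_0=i_l$ and $i_{a-1}\ne i_a$ ($a=1,\dots,l$) such that $\det(\lambda I_{n_{i_0}}-A_{i_0\cdots i_l}([X,J]))\notin\mathbb{R}[\lambda]$. Then the multiplication map $L\times G'\times G_J\to G$ is not surjective.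
   Context: For $P\in M(n,\mathbb{C})$ written in block form $P=(P_{ij})_{1\le i,j\le k}$ with $P_{ij}\in M(n_i,n_j;\mathbb{C})$, set $\widetilde P_{ij}:=P_{ij}$ if $i<j$ and $\widetilde P_{ij}:=P_{ji}^*$ (conjugate transpose) if $i>j$, and $A_{i_0\cdots i_l}(P):=\widetilde P_{i_0i_1}\widetilde P_{i_1i_2}\cdots\widetilde P_{i_{l-1}i_l}\in M(n_{i_0},\mathbb{C})$. $[X,J]=XJ-JX$; $I_m$ is the identity matrix. *)

theory Defs
  imports "Jordan_Normal_Form.Schur_Decomposition" "Jordan_Normal_Form.Char_Poly"
begin

(* Partition n = n_1 + ... + n_k given by a list ns of positive block sizes;
   blocks are indexed 0..k-1 (0-based). *)
definition blk_off :: "nat list \<Rightarrow> nat \<Rightarrow> nat" where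
  "blk_off ns i = sum_list (take i ns)"

definition in_block :: "nat list \<Rightarrow> nat \<Rightarrow> nat \<Rightarrow> bool" where
  "in_block ns i p \<longleftrightarrow> i < length ns \<and> blk_off ns i \<le> p \<and> p < blk_off ns i + ns ! i"

definition block_diagonal :: "nat list \<Rightarrow> 'a::zero mat \<Rightarrow> bool" where
  "block_diagonal ns M \<longleftrightarrow> (\<forall>p q i j. in_block ns i p \<and> in_block ns j q \<and> i \<noteq> j \<longrightarrow> M $$ (p, q) = 0)"

definition blk :: "nat list \<Rightarrow> 'a mat \<Rightarrow> nat \<Rightarrow> nat \<Rightarrow> 'a mat" where
  "blk ns P i j = mat (ns ! i) (ns ! j) (\<lambda>(a, b). P $$ (blk_off ns i + a, blk_off ns j + b))"

(* \<tilde>P_{ij} = P_{ij} if i < j, and (P_{ji})^* if i > j (the case i = j is never used) *)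
definition blk_tilde :: "nat list \<Rightarrow> complex mat \<Rightarrow> nat \<Rightarrow> nat \<Rightarrow> complex mat" where
  "blk_tilde ns P i j = (if i < j then blk ns P i j else mat_adjoint (blk ns P j i))"

fun A_path :: "nat list \<Rightarrow> complex mat \<Rightarrow> nat list \<Rightarrow> complex mat" where
  "A_path ns P [] = 1\<^sub>m 0"
| "A_path ns P [i] = 1\<^sub>m (ns ! i)"
| "A_path ns P (i # j # rest) = blk_tilde ns P i j * A_path ns P (j # rest)"

definition commutator :: "'a::comm_ring mat \<Rightarrow> 'a mat \<Rightarrow> 'a mat" where
  "commutator X Y = X * Y - Y * X"

definition unitary_group :: "nat \<Rightarrow> complex mat set" where
  "unitary_group n = {U. U \<in> carrier_mat n n \<and> mat_adjoint U * U = 1\<^sub>m n}"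

definition real_mat :: "complex mat \<Rightarrow> bool" where
  "real_mat M \<longleftrightarrow> (\<forall>i < dim_row M. \<forall>j < dim_col M. M $$ (i, j) \<in> \<real>)"

definition orthogonal_group :: "nat \<Rightarrow> complex mat set" where
  "orthogonal_group n = {U. U \<in> carrier_mat n n \<and> real_mat U \<and> transpose_mat U * U = 1\<^sub>m n}"

definition block_unitary_group :: "nat list \<Rightarrow> complex mat set" where
  "block_unitary_group ns = {U \<in> unitary_group (sum_list ns). block_diagonal ns U}"

definition centralizer_group :: "nat \<Rightarrow> complex mat \<Rightarrow> complex mat set" where
  "centralizer_group n J = {g \<in> unitary_group n. g * J = J * g}"

definition real_poly :: "complex poly \<Rightarrow> bool" where
  "real_poly p \<longleftrightarrow> (\<forall>i. coeff p i \<in> \<real>)"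

end

theory Submission
  imports Defs
begin


lemma adj_dims[simp]:
  "dim_row (mat_adjoint A) = dim_col A" "dim_col (mat_adjoint (A::complex mat)) = dim_row A"
  unfolding mat_adjoint_def by (auto simp: mat_of_rows_def)

lemma adj_index[simp]:
  "i < dim_col A \<Longrightarrow> j < dim_row A \<Longrightarrow> mat_adjoint A $$ (i,j) = cnj ((A::complex mat) $$ (j,i))"
  unfolding mat_adjoint_def by (auto simp: mat_of_rows_def)

lemma adj_carrier[simp]: "(A::complex mat) \<in> carrier_mat m n \<Longrightarrow> mat_adjoint A \<in> carrier_mat n m"
  unfolding carrier_mat_def by simp

lemma adj_adj[simp]: "mat_adjoint (mat_adjoint (A::complex mat)) = A"
  by (rule eq_matI) auto

lemma adj_mult: assumes "(A::complex mat) \<in> carrier_mat m k" "B \<in> carrier_mat k n"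
  shows "mat_adjoint (A * B) = mat_adjoint B * mat_adjoint A"
proof (rule eq_matI)
  fix i j assume ij: "i < dim_row (mat_adjoint B * mat_adjoint A)" "j < dim_col (mat_adjoint B * mat_adjoint A)"
  then have i: "i < n" and j: "j < m" using assms by auto
  have "mat_adjoint (A * B) $$ (i, j) = cnj (\<Sum>l = 0..<k. A $$ (j, l) * B $$ (l, i))"
    using assms i j by (simp add: scalar_prod_def)
  also have "\<dots> = (\<Sum>l = 0..<k. cnj (B $$ (l, i)) * cnj (A $$ (j, l)))"
    by (simp add: mult.commute)
  also have "\<dots> = (mat_adjoint B * mat_adjoint A) $$ (i, j)"
    using assms i j by (simp add: scalar_prod_def)
  finally show "mat_adjoint (A * B) $$ (i, j) = (mat_adjoint B * mat_adjoint A) $$ (i, j)" .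
qed (use assms in auto)

lemma adj_add: assumes "(A::complex mat) \<in> carrier_mat m n" "B \<in> carrier_mat m n"
  shows "mat_adjoint (A + B) = mat_adjoint A + mat_adjoint B"
  using assms by (intro eq_matI) auto

lemma adj_minus: assumes "(A::complex mat) \<in> carrier_mat m n" "B \<in> carrier_mat m n"
  shows "mat_adjoint (A - B) = mat_adjoint A - mat_adjoint B"
  using assms by (intro eq_matI) auto

lemma adj_smult: "mat_adjoint (c \<cdot>\<^sub>m (A::complex mat)) = cnj c \<cdot>\<^sub>m mat_adjoint A"
  by (intro eq_matI) auto

lemma adj_one[simp]: "mat_adjoint (1\<^sub>m n :: complex mat) = 1\<^sub>m n"
  by (intro eq_matI) auto

lemma unitary_right: assumes "(U::complex mat) \<in> carrier_mat n n" "mat_adjoint U * U = 1\<^sub>m n"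
  shows "U * mat_adjoint U = 1\<^sub>m n"
  using mat_mult_left_right_inverse[of "mat_adjoint U" n U] assms by auto

lemma blk_off_Cons_Suc[simp]: "blk_off (m # ns) (Suc i) = m + blk_off ns i"
  by (simp add: blk_off_def)
lemma blk_off_0[simp]: "blk_off ns 0 = 0"
  by (simp add: blk_off_def)

lemma blk_off_le: assumes "i < length ns" shows "blk_off ns i + ns ! i \<le> sum_list ns"
proof -
  have "blk_off ns i + ns ! i = sum_list (take (Suc i) ns)"
    using assms by (simp add: blk_off_def take_Suc_conv_app_nth)
  also have "\<dots> \<le> sum_list (take (Suc i) ns) + sum_list (drop (Suc i) ns)" by simp
  also have "\<dots> = sum_list ns" by (metis append_take_drop_id sum_list_append)
  finally show ?thesis .
qed

lemma in_some_block: "p < sum_list ns \<Longrightarrow> \<exists>i. in_block ns i p"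
proof (induction ns arbitrary: p)
  case Nil then show ?case by simp
next
  case (Cons m ns)
  show ?case
  proof (cases "p < m")
    case True
    then have "in_block (m # ns) 0 p" by (simp add: in_block_def)
    then show ?thesis by blast
  next
    case False
    with Cons.prems have "p - m < sum_list ns" by simp
    from Cons.IH[OF this] obtain i where "in_block ns i (p - m)" by blast
    with False have "in_block (m # ns) (Suc i) p" by (auto simp: in_block_def)
    then show ?thesis by blast
  qed
qed

lemma blk_carrier[simp]: "blk ns P i j \<in> carrier_mat (ns ! i) (ns ! j)"
  by (simp add: blk_def)

lemma blk_index[simp]: "a < ns ! i \<Longrightarrow> b < ns ! j \<Longrightarrow> blk ns P i j $$ (a, b) = P $$ (blk_off ns i + a, blk_off ns j + b)"
  by (simp add: blk_def)

lemma blk_dims[simp]: "dim_row (blk ns P i j) = ns ! i" "dim_col (blk ns P i j) = ns ! j"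
  by (simp_all add: blk_def)

lemma sum_block: assumes i: "i < length ns"
  and z: "\<And>r. r < sum_list ns \<Longrightarrow> \<not> (blk_off ns i \<le> r \<and> r < blk_off ns i + ns ! i) \<Longrightarrow> f r = 0"
  shows "(\<Sum>r<sum_list ns. f r) = (\<Sum>c<ns ! i. f (blk_off ns i + c))"
proof -
  have le: "blk_off ns i + ns ! i \<le> sum_list ns" using blk_off_le[OF i] .
  have "(\<Sum>r<sum_list ns. f r) = (\<Sum>r\<in>{blk_off ns i..<blk_off ns i + ns ! i}. f r)"
    by (rule sum.mono_neutral_right) (use le z in auto)
  also have "\<dots> = (\<Sum>c<ns ! i. f (blk_off ns i + c))"
    by (rule sum.reindex_bij_witness[of _ "\<lambda>c. blk_off ns i + c" "\<lambda>r. r - blk_off ns i"]) auto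
  finally show ?thesis .
qed

lemma bd_zero: assumes bd: "block_diagonal ns A" and i: "i < length ns" and a: "a < ns ! i"
  and r: "r < sum_list ns" and nr: "\<not> (blk_off ns i \<le> r \<and> r < blk_off ns i + ns ! i)"
  shows "A $$ (blk_off ns i + a, r) = 0" "A $$ (r, blk_off ns i + a) = 0"
proof -
  obtain j where j: "in_block ns j r" using in_some_block[OF r] by blast
  have ij: "i \<noteq> j" using j nr by (auto simp: in_block_def)
  have ib: "in_block ns i (blk_off ns i + a)" using i a by (simp add: in_block_def)
  have ji: "j \<noteq> i" using ij by simp
  show "A $$ (blk_off ns i + a, r) = 0"
    using bd ib j ij unfolding block_diagonal_def by blast
  show "A $$ (r, blk_off ns i + a) = 0"
    using bd ib j ji unfolding block_diagonal_def by blast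
qed


lemma blk_mult_bd_left: assumes bd: "block_diagonal ns A" and A: "A \<in> carrier_mat (sum_list ns) (sum_list ns)"
  and B: "B \<in> carrier_mat (sum_list ns) (sum_list ns)" and i: "i < length ns" and j: "j < length ns"
  shows "blk ns (A * B) i j = blk ns A i i * blk ns B i j"
proof (rule eq_matI)
  fix a b assume ab: "a < dim_row (blk ns A i i * blk ns B i j)" "b < dim_col (blk ns A i i * blk ns B i j)"
  then have a: "a < ns!i" and b: "b < ns!j" by auto
  have le_i: "blk_off ns i + ns ! i \<le> sum_list ns" by (rule blk_off_le[OF i])
  have le_j: "blk_off ns j + ns ! j \<le> sum_list ns" by (rule blk_off_le[OF j])
  have "blk ns (A*B) i j $$ (a,b) = (\<Sum>r<sum_list ns. A $$ (blk_off ns i + a, r) * B $$ (r, blk_off ns j + b))"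
    using a b A B le_i le_j by (simp add: scalar_prod_def atLeast0LessThan)
  also have "\<dots> = (\<Sum>c<ns!i. A $$ (blk_off ns i + a, blk_off ns i + c) * B $$ (blk_off ns i + c, blk_off ns j + b))"
    by (rule sum_block[OF i]) (simp add: bd_zero[OF bd i a])
  also have "\<dots> = (blk ns A i i * blk ns B i j) $$ (a,b)"
    using a b by (simp add: scalar_prod_def atLeast0LessThan)
  finally show "blk ns (A * B) i j $$ (a, b) = (blk ns A i i * blk ns B i j) $$ (a, b)" .
qed auto

lemma blk_mult_bd_right: assumes bd: "block_diagonal ns A" and A: "A \<in> carrier_mat (sum_list ns) (sum_list ns)"
  and B: "B \<in> carrier_mat (sum_list ns) (sum_list ns)" and i: "i < length ns" and j: "j < length ns"
  shows "blk ns (B * A) i j = blk ns B i j * blk ns A j j"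
proof (rule eq_matI)
  fix a b assume ab: "a < dim_row (blk ns B i j * blk ns A j j)" "b < dim_col (blk ns B i j * blk ns A j j)"
  then have a: "a < ns!i" and b: "b < ns!j" by auto
  have le_i: "blk_off ns i + ns ! i \<le> sum_list ns" by (rule blk_off_le[OF i])
  have le_j: "blk_off ns j + ns ! j \<le> sum_list ns" by (rule blk_off_le[OF j])
  have "blk ns (B*A) i j $$ (a,b) = (\<Sum>r<sum_list ns. B $$ (blk_off ns i + a, r) * A $$ (r, blk_off ns j + b))"
    using a b A B le_i le_j by (simp add: scalar_prod_def atLeast0LessThan)
  also have "\<dots> = (\<Sum>c<ns!j. B $$ (blk_off ns i + a, blk_off ns j + c) * A $$ (blk_off ns j + c, blk_off ns j + b))"
    by (rule sum_block[OF j]) (simp add: bd_zero[OF bd j b])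
  also have "\<dots> = (blk ns B i j * blk ns A j j) $$ (a,b)"
    using a b by (simp add: scalar_prod_def atLeast0LessThan)
  finally show "blk ns (B * A) i j $$ (a, b) = (blk ns B i j * blk ns A j j) $$ (a, b)" .
qed auto

lemma blk_adj: assumes P: "(P::complex mat) \<in> carrier_mat (sum_list ns) (sum_list ns)"
  and i: "i < length ns" and j: "j < length ns"
  shows "blk ns (mat_adjoint P) i j = mat_adjoint (blk ns P j i)"
proof (rule eq_matI)
  fix a b assume ab: "a < dim_row (mat_adjoint (blk ns P j i))" "b < dim_col (mat_adjoint (blk ns P j i))"
  then have a: "a < ns!i" and b: "b < ns!j" by auto
  have le_i: "blk_off ns i + ns ! i \<le> sum_list ns" by (rule blk_off_le[OF i])
  have le_j: "blk_off ns j + ns ! j \<le> sum_list ns" by (rule blk_off_le[OF j])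
  show "blk ns (mat_adjoint P) i j $$ (a, b) = mat_adjoint (blk ns P j i) $$ (a, b)"
    using a b P le_i le_j by simp
qed auto

lemma in_block_lt: "in_block ns i p \<Longrightarrow> p < sum_list ns"
  unfolding in_block_def using blk_off_le[of i ns] by linarith

lemma bd_adj: assumes bd: "block_diagonal ns A" and A: "(A::complex mat) \<in> carrier_mat (sum_list ns) (sum_list ns)"
  shows "block_diagonal ns (mat_adjoint A)"
  unfolding block_diagonal_def
proof (intro allI impI)
  fix p q i j assume h: "in_block ns i p \<and> in_block ns j q \<and> i \<noteq> j"
  then have p: "p < sum_list ns" and q: "q < sum_list ns" using in_block_lt by blast+
  have "A $$ (q, p) = 0" using bd h unfolding block_diagonal_def by blast
  then show "mat_adjoint A $$ (p, q) = 0" using p q A by simp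
qed

lemma blk_add: assumes "A \<in> carrier_mat (sum_list ns) (sum_list ns)" "B \<in> carrier_mat (sum_list ns) (sum_list ns)"
  and i: "i < length ns" and j: "j < length ns"
  shows "blk ns (A + B) i j = blk ns A i j + blk ns B i j"
  using assms blk_off_le[OF i] blk_off_le[OF j] by (intro eq_matI) auto

lemma blk_smult: assumes "A \<in> carrier_mat (sum_list ns) (sum_list ns)"
  and i: "i < length ns" and j: "j < length ns"
  shows "blk ns (c \<cdot>\<^sub>m A) i j = c \<cdot>\<^sub>m blk ns A i j"
  using assms blk_off_le[OF i] blk_off_le[OF j] by (intro eq_matI) auto

lemma blk_one: assumes i: "i < length ns"
  shows "blk ns (1\<^sub>m (sum_list ns)) i i = 1\<^sub>m (ns ! i)"
  using assms blk_off_le[OF i] by (intro eq_matI) auto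

lemma bdD: assumes "block_diagonal ns A" "in_block ns i p" "in_block ns j q" "i \<noteq> j" shows "A $$ (p, q) = 0"
  using assms(1)[unfolded block_diagonal_def, rule_format, of i p j q] assms(2-4) by simp

lemma blk_bd_zero: assumes bd: "block_diagonal ns A"
  and i: "i < length ns" and j: "j < length ns" and ij: "i \<noteq> j"
  shows "blk ns A i j = 0\<^sub>m (ns ! i) (ns ! j)"
proof (rule eq_matI)
  fix a b assume "a < dim_row (0\<^sub>m (ns ! i) (ns ! j))" "b < dim_col (0\<^sub>m (ns ! i) (ns ! j) :: 'a mat)"
  then have a: "a < ns!i" and b: "b < ns!j" by auto
  have "in_block ns i (blk_off ns i + a)" using a i by (simp add: in_block_def)
  moreover have "in_block ns j (blk_off ns j + b)" using b j by (simp add: in_block_def)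
  ultimately have "A $$ (blk_off ns i + a, blk_off ns j + b) = 0"
    by (rule bdD[OF bd _ _ ij])
  then show "blk ns A i j $$ (a, b) = 0\<^sub>m (ns ! i) (ns ! j) $$ (a, b)" using a b by simp
next
  show "dim_row (blk ns A i j) = dim_row (0\<^sub>m (ns ! i) (ns ! j) :: 'a mat)" by simp
next
  show "dim_col (blk ns A i j) = dim_col (0\<^sub>m (ns ! i) (ns ! j) :: 'a mat)" by simp
qed

lemma blk_tilde_carrier[simp]: "blk_tilde ns P i j \<in> carrier_mat (ns ! i) (ns ! j)"
  unfolding blk_tilde_def using adj_carrier[OF blk_carrier[of ns P j i]] by simp

lemma A_path_carrier: "path \<noteq> [] \<Longrightarrow> A_path ns P path \<in> carrier_mat (ns ! hd path) (ns ! last path)"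
proof (induction ns P path rule: A_path.induct)
  case (3 ns P i j rest)
  have "A_path ns P (j # rest) \<in> carrier_mat (ns ! j) (ns ! last (j # rest))"
    using "3.IH" by simp
  from mult_carrier_mat[OF blk_tilde_carrier[of ns P i j] this] show ?case by simp
qed auto


lemma smult_smult_mat': "a \<cdot>\<^sub>m (b \<cdot>\<^sub>m (A::'a::comm_ring_1 mat)) = (a * b) \<cdot>\<^sub>m A"
  by (rule eq_matI) auto

lemma one_smult_mat': "(1::'a::comm_ring_1) \<cdot>\<^sub>m A = A"
  by (rule eq_matI) auto

lemma shape1: assumes Ai: "(Ai::complex mat) \<in> carrier_mat p p" and T: "T \<in> carrier_mat p q"
  and Aj: "Aj \<in> carrier_mat q q" and M: "M \<in> carrier_mat q r" and Al: "Al \<in> carrier_mat r r"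
  and u: "Aj * mat_adjoint Aj = 1\<^sub>m q"
  shows "(mat_adjoint Ai * T * Aj) * (mat_adjoint Aj * M * Al) = mat_adjoint Ai * (T * M) * Al"
proof -
  have B: "mat_adjoint Ai \<in> carrier_mat p p" using Ai by simp
  have C: "mat_adjoint Aj \<in> carrier_mat q q" using Aj by simp
  have BT: "mat_adjoint Ai * T \<in> carrier_mat p q" using B T by simp
  have CM: "mat_adjoint Aj * M \<in> carrier_mat q r" using C M by simp
  have CMA: "mat_adjoint Aj * M * Al \<in> carrier_mat q r" using CM Al by simp
  have "(mat_adjoint Ai * T * Aj) * (mat_adjoint Aj * M * Al) = (mat_adjoint Ai * T) * (Aj * (mat_adjoint Aj * M * Al))"
    by (rule assoc_mult_mat[OF BT Aj CMA])
  also have "Aj * (mat_adjoint Aj * M * Al) = (Aj * (mat_adjoint Aj * M)) * Al"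
    by (rule assoc_mult_mat[OF Aj CM Al, symmetric])
  also have "Aj * (mat_adjoint Aj * M) = (Aj * mat_adjoint Aj) * M"
    by (rule assoc_mult_mat[OF Aj C M, symmetric])
  also have "\<dots> = M" using u M by simp
  also have "(mat_adjoint Ai * T) * (M * Al) = ((mat_adjoint Ai * T) * M) * Al"
    by (rule assoc_mult_mat[OF BT M Al, symmetric])
  also have "(mat_adjoint Ai * T) * M = mat_adjoint Ai * (T * M)"
    by (rule assoc_mult_mat[OF B T M])
  finally show ?thesis .
qed

lemma blk_conj: assumes bd: "block_diagonal ns a" and a: "(a::complex mat) \<in> carrier_mat (sum_list ns) (sum_list ns)"
  and P: "P \<in> carrier_mat (sum_list ns) (sum_list ns)" and i: "i < length ns" and j: "j < length ns"
  shows "blk ns (mat_adjoint a * P * a) i j = mat_adjoint (blk ns a i i) * blk ns P i j * blk ns a j j"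
proof -
  have bda: "block_diagonal ns (mat_adjoint a)" by (rule bd_adj[OF bd a])
  have aa: "mat_adjoint a \<in> carrier_mat (sum_list ns) (sum_list ns)" using a by simp
  have aP: "mat_adjoint a * P \<in> carrier_mat (sum_list ns) (sum_list ns)" using aa P by simp
  have "blk ns (mat_adjoint a * P * a) i j = blk ns (mat_adjoint a * P) i j * blk ns a j j"
    by (rule blk_mult_bd_right[OF bd a aP i j])
  also have "blk ns (mat_adjoint a * P) i j = blk ns (mat_adjoint a) i i * blk ns P i j"
    by (rule blk_mult_bd_left[OF bda aa P i j])
  also have "blk ns (mat_adjoint a) i i = mat_adjoint (blk ns a i i)"
    by (rule blk_adj[OF a i i])
  finally show ?thesis .
qed

lemma blk_tilde_conj: assumes bd: "block_diagonal ns a" and a: "(a::complex mat) \<in> carrier_mat (sum_list ns) (sum_list ns)"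
  and P: "P \<in> carrier_mat (sum_list ns) (sum_list ns)" and i: "i < length ns" and j: "j < length ns"
  shows "blk_tilde ns (mat_adjoint a * P * a) i j = mat_adjoint (blk ns a i i) * blk_tilde ns P i j * blk ns a j j"
proof (cases "i < j")
  case True
  then show ?thesis unfolding blk_tilde_def using blk_conj[OF bd a P i j] by simp
next
  case False
  have Ai: "blk ns a i i \<in> carrier_mat (ns!i) (ns!i)" by simp
  have Aj: "blk ns a j j \<in> carrier_mat (ns!j) (ns!j)" by simp
  have Pji: "blk ns P j i \<in> carrier_mat (ns!j) (ns!i)" by simp
  have Bj: "mat_adjoint (blk ns a j j) \<in> carrier_mat (ns!j) (ns!j)" by simp
  have "blk_tilde ns (mat_adjoint a * P * a) i j = mat_adjoint (mat_adjoint (blk ns a j j) * blk ns P j i * blk ns a i i)"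
    unfolding blk_tilde_def using False blk_conj[OF bd a P j i] by simp
  also have "\<dots> = mat_adjoint (blk ns a i i) * mat_adjoint (mat_adjoint (blk ns a j j) * blk ns P j i)"
    by (rule adj_mult[OF mult_carrier_mat[OF Bj Pji] Ai])
  also have "mat_adjoint (mat_adjoint (blk ns a j j) * blk ns P j i) = mat_adjoint (blk ns P j i) * blk ns a j j"
    using adj_mult[OF Bj Pji] by simp
  also have "mat_adjoint (blk ns a i i) * (mat_adjoint (blk ns P j i) * blk ns a j j)
     = mat_adjoint (blk ns a i i) * mat_adjoint (blk ns P j i) * blk ns a j j"
    by (rule assoc_mult_mat[OF adj_carrier[OF Ai] adj_carrier[OF Pji] Aj, symmetric])
  finally show ?thesis unfolding blk_tilde_def using False by simp
qed

lemma blk_unitary: assumes bd: "block_diagonal ns a" and a: "(a::complex mat) \<in> carrier_mat (sum_list ns) (sum_list ns)"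
  and u: "mat_adjoint a * a = 1\<^sub>m (sum_list ns)" and i: "i < length ns"
  shows "mat_adjoint (blk ns a i i) * blk ns a i i = 1\<^sub>m (ns ! i)"
        "blk ns a i i * mat_adjoint (blk ns a i i) = 1\<^sub>m (ns ! i)"
proof -
  have aa: "mat_adjoint a \<in> carrier_mat (sum_list ns) (sum_list ns)" using a by simp
  have bda: "block_diagonal ns (mat_adjoint a)" by (rule bd_adj[OF bd a])
  have u2: "a * mat_adjoint a = 1\<^sub>m (sum_list ns)" by (rule unitary_right[OF a u])
  have "mat_adjoint (blk ns a i i) * blk ns a i i = blk ns (mat_adjoint a) i i * blk ns a i i"
    using blk_adj[OF a i i] by simp
  also have "\<dots> = blk ns (mat_adjoint a * a) i i"
    by (rule blk_mult_bd_left[OF bda aa a i i, symmetric])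
  also have "\<dots> = 1\<^sub>m (ns ! i)" using u blk_one[OF i] by simp
  finally show "mat_adjoint (blk ns a i i) * blk ns a i i = 1\<^sub>m (ns ! i)" .
  have "blk ns a i i * mat_adjoint (blk ns a i i) = blk ns a i i * blk ns (mat_adjoint a) i i"
    using blk_adj[OF a i i] by simp
  also have "\<dots> = blk ns (a * mat_adjoint a) i i"
    by (rule blk_mult_bd_left[OF bd a aa i i, symmetric])
  also have "\<dots> = 1\<^sub>m (ns ! i)" using u2 blk_one[OF i] by simp
  finally show "blk ns a i i * mat_adjoint (blk ns a i i) = 1\<^sub>m (ns ! i)" .
qed

definition good_path :: "nat list \<Rightarrow> nat list \<Rightarrow> bool" where
  "good_path ns path \<longleftrightarrow> path \<noteq> [] \<and> (\<forall>i \<in> set path. i < length ns) \<and>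
     (\<forall>k. Suc k < length path \<longrightarrow> path ! k \<noteq> path ! Suc k)"

lemma good_path_tail: "good_path ns (i # j # rest) \<Longrightarrow> good_path ns (j # rest) \<and> i \<noteq> j \<and> i < length ns \<and> j < length ns"
  unfolding good_path_def
proof (intro conjI)
  assume h: "i # j # rest \<noteq> [] \<and> (\<forall>i\<in>set (i # j # rest). i < length ns) \<and>
    (\<forall>k. Suc k < length (i # j # rest) \<longrightarrow> (i # j # rest) ! k \<noteq> (i # j # rest) ! Suc k)"
  show "\<forall>k. Suc k < length (j # rest) \<longrightarrow> (j # rest) ! k \<noteq> (j # rest) ! Suc k"
  proof (intro allI impI)
    fix k assume "Suc k < length (j # rest)"
    then have "Suc (Suc k) < length (i # j # rest)" by simp
    with h have "(i # j # rest) ! Suc k \<noteq> (i # j # rest) ! Suc (Suc k)" by blast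
    then show "(j # rest) ! k \<noteq> (j # rest) ! Suc k" by simp
  qed
  from h have "(i # j # rest) ! 0 \<noteq> (i # j # rest) ! Suc 0" by fastforce
  then show "i \<noteq> j" by simp
qed auto

lemma A_path_conj: assumes bd: "block_diagonal ns a" and a: "(a::complex mat) \<in> carrier_mat (sum_list ns) (sum_list ns)"
  and u: "mat_adjoint a * a = 1\<^sub>m (sum_list ns)"
  and P: "P \<in> carrier_mat (sum_list ns) (sum_list ns)"
  shows "good_path ns path \<Longrightarrow> A_path ns (mat_adjoint a * P * a) path
     = mat_adjoint (blk ns a (hd path) (hd path)) * A_path ns P path * blk ns a (last path) (last path)"
proof (induction path rule: induct_list012)
  case 1
  then show ?case by (simp add: good_path_def)
next
  case (2 i)
  then have i: "i < length ns" by (simp add: good_path_def)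
  show ?case using blk_unitary(1)[OF bd a u i] by simp
next
  case (3 i j rest)
  from good_path_tail[OF "3.prems"] have g: "good_path ns (j # rest)" and ij: "i \<noteq> j"
    and i: "i < length ns" and j: "j < length ns" by auto
  have IH: "A_path ns (mat_adjoint a * P * a) (j # rest)
     = mat_adjoint (blk ns a j j) * A_path ns P (j # rest) * blk ns a (last (j # rest)) (last (j # rest))"
    using "3.IH"(2)[OF g] by simp
  have M: "A_path ns P (j # rest) \<in> carrier_mat (ns ! j) (ns ! last (j # rest))"
    using A_path_carrier[of "j # rest" ns P] by simp
  have "A_path ns (mat_adjoint a * P * a) (i # j # rest)
     = (mat_adjoint (blk ns a i i) * blk_tilde ns P i j * blk ns a j j) *
       (mat_adjoint (blk ns a j j) * A_path ns P (j # rest) * blk ns a (last (j # rest)) (last (j # rest)))"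
    using IH blk_tilde_conj[OF bd a P i j] by simp
  also have "\<dots> = mat_adjoint (blk ns a i i) * (blk_tilde ns P i j * A_path ns P (j # rest)) * blk ns a (last (j # rest)) (last (j # rest))"
    by (rule shape1[OF blk_carrier blk_tilde_carrier blk_carrier M blk_carrier blk_unitary(2)[OF bd a u j]])
  finally show ?case by simp
qed


declare minus_carrier_mat[simp]

lemma infinite_Reals_complex: "infinite (\<real> :: complex set)"
  unfolding Reals_def by (metis finite_imageD infinite_UNIV_char_0 inj_of_real)

lemma real_poly_from_values: assumes h: "\<forall>x\<in>\<real>. poly p x \<in> \<real>" shows "real_poly p"
proof -
  let ?q = "p - map_poly cnj p"
  have "\<real> \<subseteq> {x. poly ?q x = 0}"
  proof
    fix x :: complex assume x: "x \<in> \<real>"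
    then have "cnj x = x" using Reals_cnj_iff by blast
    moreover have "cnj (poly p x) = poly p x" using h x Reals_cnj_iff by blast
    ultimately show "x \<in> {x. poly ?q x = 0}" by simp
  qed
  then have "infinite {x. poly ?q x = 0}" using infinite_Reals_complex finite_subset by blast
  then have "?q = 0" using poly_roots_finite by blast
  then have pq: "map_poly cnj p = p" by simp
  show ?thesis unfolding real_poly_def
  proof
    fix i
    have "cnj (coeff p i) = coeff (map_poly cnj p) i" by (simp add: coeff_map_poly)
    then have "cnj (coeff p i) = coeff p i" using pq by simp
    then show "coeff p i \<in> \<real>" using Reals_cnj_iff by blast
  qed
qed

lemma real_mat_mult: assumes "real_mat A" "real_mat B" "A \<in> carrier_mat m k" "B \<in> carrier_mat k n"
  shows "real_mat (A * B)"
  using assms unfolding real_mat_def by (auto simp: scalar_prod_def intro!: sum_in_Reals Reals_mult)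

lemma real_mat_adj: assumes "real_mat A" shows "real_mat (mat_adjoint A)"
  using assms unfolding real_mat_def by (auto simp: Reals_cnj_iff)

lemma real_mat_one: "real_mat (1\<^sub>m n)"
  unfolding real_mat_def by auto

lemma real_mat_blk: assumes "real_mat P" "P \<in> carrier_mat (sum_list ns) (sum_list ns)"
  and i: "i < length ns" and j: "j < length ns"
  shows "real_mat (blk ns P i j)"
  using assms blk_off_le[OF i] blk_off_le[OF j] unfolding real_mat_def by auto

lemma real_mat_blk_tilde: assumes "real_mat P" "P \<in> carrier_mat (sum_list ns) (sum_list ns)"
  and i: "i < length ns" and j: "j < length ns"
  shows "real_mat (blk_tilde ns P i j)"
  unfolding blk_tilde_def using real_mat_blk[OF assms] real_mat_blk[OF assms(1,2) j i] real_mat_adj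
  by simp

lemma real_mat_A_path: assumes R: "real_mat P" and P: "P \<in> carrier_mat (sum_list ns) (sum_list ns)"
  shows "good_path ns path \<Longrightarrow> real_mat (A_path ns P path)"
proof (induction path rule: induct_list012)
  case 1
  then show ?case by (simp add: good_path_def)
next
  case (2 i)
  then show ?case by (simp add: real_mat_one)
next
  case (3 i j rest)
  from good_path_tail[OF "3.prems"] have g: "good_path ns (j # rest)" and ij: "i \<noteq> j"
    and i: "i < length ns" and j: "j < length ns" by auto
  have M: "A_path ns P (j # rest) \<in> carrier_mat (ns ! j) (ns ! last (j # rest))"
    using A_path_carrier[of "j # rest" ns P] by simp
  have "real_mat (blk_tilde ns P i j * A_path ns P (j # rest))"
    by (rule real_mat_mult[OF real_mat_blk_tilde[OF R P i j] "3.IH"(2)[OF g] blk_tilde_carrier M])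
  then show ?case by simp
qed

lemma real_det: assumes "real_mat M" "M \<in> carrier_mat m m" "x \<in> \<real>"
  shows "det (x \<cdot>\<^sub>m 1\<^sub>m m - M) \<in> \<real>"
proof -
  have C: "x \<cdot>\<^sub>m 1\<^sub>m m - M \<in> carrier_mat m m" using assms by simp
  have E: "\<And>i j. i < m \<Longrightarrow> j < m \<Longrightarrow> (x \<cdot>\<^sub>m 1\<^sub>m m - M) $$ (i, j) \<in> \<real>"
    using assms unfolding real_mat_def by auto
  show ?thesis unfolding det_def'[OF C]
  proof (intro sum_in_Reals Reals_mult prod_in_Reals)
    fix p i assume p: "p \<in> {p. p permutes {0..<m}}" and i: "i \<in> {0..<m}"
    then have "p i < m" using permutes_in_image[of p "{0..<m}" i] by auto
    then show "(x \<cdot>\<^sub>m 1\<^sub>m m - M) $$ (i, p i) \<in> \<real>" using E i by auto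
  next
    fix p show "signof p \<in> \<real>" by (simp add: sign_def)
  qed
qed

lemma cp_eval: assumes M: "(M::complex mat) \<in> carrier_mat m m"
  shows "poly (char_poly M) x = det (x \<cdot>\<^sub>m 1\<^sub>m m - M)"
proof -
  have "- char_matrix M x = x \<cdot>\<^sub>m 1\<^sub>m m - M"
    using M unfolding char_matrix_def by (intro eq_matI) auto
  then show ?thesis using char_poly_matrix[OF M, of x] by simp
qed

lemma det_conj: assumes u: "(u::complex mat) \<in> carrier_mat m m" and M: "M \<in> carrier_mat m m"
  and uu: "mat_adjoint u * u = 1\<^sub>m m"
  shows "det (x \<cdot>\<^sub>m 1\<^sub>m m - mat_adjoint u * M * u) = det (x \<cdot>\<^sub>m 1\<^sub>m m - M)"
proof -
  have a: "mat_adjoint u \<in> carrier_mat m m" using u by simp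
  have I: "x \<cdot>\<^sub>m 1\<^sub>m m \<in> carrier_mat m m" by simp
  have Z: "x \<cdot>\<^sub>m 1\<^sub>m m - M \<in> carrier_mat m m" using M by simp
  have "mat_adjoint u * (x \<cdot>\<^sub>m 1\<^sub>m m - M) = mat_adjoint u * (x \<cdot>\<^sub>m 1\<^sub>m m) - mat_adjoint u * M"
    by (rule mult_minus_distrib_mat[OF a I M])
  also have "mat_adjoint u * (x \<cdot>\<^sub>m 1\<^sub>m m) = x \<cdot>\<^sub>m mat_adjoint u"
    using a mult_smult_distrib[OF a, of "1\<^sub>m m" m x] right_mult_one_mat[OF a] by simp
  finally have e1: "mat_adjoint u * (x \<cdot>\<^sub>m 1\<^sub>m m - M) = x \<cdot>\<^sub>m mat_adjoint u - mat_adjoint u * M" .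
  have "mat_adjoint u * (x \<cdot>\<^sub>m 1\<^sub>m m - M) * u = (x \<cdot>\<^sub>m mat_adjoint u - mat_adjoint u * M) * u"
    using e1 by simp
  also have "\<dots> = (x \<cdot>\<^sub>m mat_adjoint u) * u - mat_adjoint u * M * u"
    by (rule minus_mult_distrib_mat) (use a M u in auto)
  also have "(x \<cdot>\<^sub>m mat_adjoint u) * u = x \<cdot>\<^sub>m 1\<^sub>m m"
    using mult_smult_assoc_mat[OF a u, of x] uu by simp
  finally have e2: "mat_adjoint u * (x \<cdot>\<^sub>m 1\<^sub>m m - M) * u = x \<cdot>\<^sub>m 1\<^sub>m m - mat_adjoint u * M * u" .
  have "det (mat_adjoint u * (x \<cdot>\<^sub>m 1\<^sub>m m - M) * u) = det (mat_adjoint u) * det (x \<cdot>\<^sub>m 1\<^sub>m m - M) * det u"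
    using det_mult[OF mult_carrier_mat[OF a Z] u] det_mult[OF a Z] by simp
  also have "\<dots> = det (x \<cdot>\<^sub>m 1\<^sub>m m - M) * (det (mat_adjoint u) * det u)" by (simp add: ac_simps)
  also have "det (mat_adjoint u) * det u = 1" using det_mult[OF a u] uu by simp
  finally show ?thesis using e2 by simp
qed

lemma det_scale: assumes M: "(M::complex mat) \<in> carrier_mat m m"
  shows "det ((c * x) \<cdot>\<^sub>m 1\<^sub>m m - c \<cdot>\<^sub>m M) = c ^ m * det (x \<cdot>\<^sub>m 1\<^sub>m m - M)"
proof -
  have "(c * x) \<cdot>\<^sub>m 1\<^sub>m m - c \<cdot>\<^sub>m M = c \<cdot>\<^sub>m (x \<cdot>\<^sub>m 1\<^sub>m m - M)"
    using M by (intro eq_matI) (auto simp: algebra_simps)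
  then show ?thesis using M by simp
qed

lemma blk_tilde_scale: assumes bd: "block_diagonal ns J" and J: "(J::complex mat) \<in> carrier_mat (sum_list ns) (sum_list ns)"
  and D: "D \<in> carrier_mat (sum_list ns) (sum_list ns)" and c: "cnj c = c"
  and i: "i < length ns" and j: "j < length ns" and ij: "i \<noteq> j"
  shows "blk_tilde ns (J + c \<cdot>\<^sub>m D) i j = c \<cdot>\<^sub>m blk_tilde ns D i j"
proof -
  have cD: "c \<cdot>\<^sub>m D \<in> carrier_mat (sum_list ns) (sum_list ns)" using D by simp
  have e: "\<And>i j. i < length ns \<Longrightarrow> j < length ns \<Longrightarrow> i \<noteq> j \<Longrightarrow> blk ns (J + c \<cdot>\<^sub>m D) i j = c \<cdot>\<^sub>m blk ns D i j"
  proof -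
    fix i j assume i: "i < length ns" and j: "j < length ns" and ij: "i \<noteq> j"
    have "blk ns (J + c \<cdot>\<^sub>m D) i j = blk ns J i j + blk ns (c \<cdot>\<^sub>m D) i j"
      by (rule blk_add[OF J cD i j])
    also have "\<dots> = 0\<^sub>m (ns!i) (ns!j) + c \<cdot>\<^sub>m blk ns D i j"
      using blk_bd_zero[OF bd i j ij] blk_smult[OF D i j] by simp
    also have "\<dots> = c \<cdot>\<^sub>m blk ns D i j" by (rule left_add_zero_mat) simp
    finally show "blk ns (J + c \<cdot>\<^sub>m D) i j = c \<cdot>\<^sub>m blk ns D i j" .
  qed
  show ?thesis
  proof (cases "i < j")
    case True then show ?thesis unfolding blk_tilde_def using e[OF i j ij] by simp
  next
    case False then show ?thesis unfolding blk_tilde_def using e[OF j i] ij c by (simp add: adj_smult)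
  qed
qed

lemma A_path_scale: assumes bd: "block_diagonal ns J" and J: "(J::complex mat) \<in> carrier_mat (sum_list ns) (sum_list ns)"
  and D: "D \<in> carrier_mat (sum_list ns) (sum_list ns)" and c: "cnj c = c"
  shows "good_path ns path \<Longrightarrow> A_path ns (J + c \<cdot>\<^sub>m D) path = c ^ (length path - 1) \<cdot>\<^sub>m A_path ns D path"
proof (induction path rule: induct_list012)
  case 1
  then show ?case by (simp add: good_path_def)
next
  case (2 i)
  then show ?case by (simp add: one_smult_mat')
next
  case (3 i j rest)
  from good_path_tail[OF "3.prems"] have g: "good_path ns (j # rest)" and ij: "i \<noteq> j"
    and i: "i < length ns" and j: "j < length ns" by auto
  have M: "A_path ns D (j # rest) \<in> carrier_mat (ns ! j) (ns ! last (j # rest))"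
    using A_path_carrier[of "j # rest" ns D] by simp
  have T: "blk_tilde ns D i j \<in> carrier_mat (ns ! i) (ns ! j)" by simp
  have "A_path ns (J + c \<cdot>\<^sub>m D) (i # j # rest) = (c \<cdot>\<^sub>m blk_tilde ns D i j) * (c ^ length rest \<cdot>\<^sub>m A_path ns D (j # rest))"
    using blk_tilde_scale[OF bd J D c i j ij] "3.IH"(2)[OF g] by simp
  also have "\<dots> = c \<cdot>\<^sub>m (blk_tilde ns D i j * (c ^ length rest \<cdot>\<^sub>m A_path ns D (j # rest)))"
    by (rule mult_smult_assoc_mat[OF T smult_carrier_mat[OF M]])
  also have "blk_tilde ns D i j * (c ^ length rest \<cdot>\<^sub>m A_path ns D (j # rest)) = c ^ length rest \<cdot>\<^sub>m (blk_tilde ns D i j * A_path ns D (j # rest))"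
    by (rule mult_smult_distrib[OF T M])
  finally show ?case by (simp add: smult_smult_mat')
qed


definition mcont :: "(real \<Rightarrow> complex mat) \<Rightarrow> nat \<Rightarrow> nat \<Rightarrow> bool" where
  "mcont F r c \<longleftrightarrow> (\<forall>t. F t \<in> carrier_mat r c) \<and> (\<forall>i<r. \<forall>j<c. continuous (at 0) (\<lambda>t. F t $$ (i,j)))"

lemma mcontD: "mcont F r c \<Longrightarrow> F t \<in> carrier_mat r c"
  "mcont F r c \<Longrightarrow> i < r \<Longrightarrow> j < c \<Longrightarrow> continuous (at 0) (\<lambda>t. F t $$ (i,j))"
  unfolding mcont_def by auto

lemma mcont_const: "A \<in> carrier_mat r c \<Longrightarrow> mcont (\<lambda>t. A) r c"
  unfolding mcont_def by auto

lemma mcont_add: assumes "mcont F r c" "mcont G r c" shows "mcont (\<lambda>t. F t + G t) r c"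
  unfolding mcont_def
proof (intro conjI allI impI)
  fix t show "F t + G t \<in> carrier_mat r c" using mcontD(1)[OF assms(2), of t] by simp
next
  fix i j assume ij: "i < r" "j < c"
  have "(F t + G t) $$ (i,j) = F t $$ (i,j) + G t $$ (i,j)"
    for t using mcontD(1)[OF assms(1), of t] mcontD(1)[OF assms(2), of t] ij by simp
  then show "continuous (at 0) (\<lambda>t. (F t + G t) $$ (i, j))"
    using continuous_add[OF mcontD(2)[OF assms(1) ij] mcontD(2)[OF assms(2) ij]] by simp
qed

lemma mcont_minus: assumes "mcont F r c" "mcont G r c" shows "mcont (\<lambda>t. F t - G t) r c"
  unfolding mcont_def
proof (intro conjI allI impI)
  fix t show "F t - G t \<in> carrier_mat r c" using mcontD(1)[OF assms(2), of t] by simp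
next
  fix i j assume ij: "i < r" "j < c"
  have "(F t - G t) $$ (i,j) = F t $$ (i,j) - G t $$ (i,j)"
    for t using mcontD(1)[OF assms(1), of t] mcontD(1)[OF assms(2), of t] ij by simp
  then show "continuous (at 0) (\<lambda>t. (F t - G t) $$ (i, j))"
    using continuous_diff[OF mcontD(2)[OF assms(1) ij] mcontD(2)[OF assms(2) ij]] by simp
qed

lemma mcont_smult: assumes f: "continuous (at 0) f" and F: "mcont F r c" shows "mcont (\<lambda>t. f t \<cdot>\<^sub>m F t) r c"
  unfolding mcont_def
proof (intro conjI allI impI)
  fix t show "f t \<cdot>\<^sub>m F t \<in> carrier_mat r c" using mcontD(1)[OF F, of t] by simp
next
  fix i j assume ij: "i < r" "j < c"
  have "(f t \<cdot>\<^sub>m F t) $$ (i,j) = f t * F t $$ (i,j)"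
    for t using mcontD(1)[OF F, of t] ij by simp
  then show "continuous (at 0) (\<lambda>t. (f t \<cdot>\<^sub>m F t) $$ (i, j))"
    using continuous_mult[OF f mcontD(2)[OF F ij]] by simp
qed

lemma mcont_mult: assumes F: "mcont F r k" and G: "mcont G k c" shows "mcont (\<lambda>t. F t * G t) r c"
  unfolding mcont_def
proof (intro conjI allI impI)
  fix t show "F t * G t \<in> carrier_mat r c" using mcontD(1)[OF F, of t] mcontD(1)[OF G, of t] by simp
next
  fix i j assume ij: "i < r" "j < c"
  have "(F t * G t) $$ (i,j) = (\<Sum>l\<in>{0..<k}. F t $$ (i,l) * G t $$ (l,j))"
    for t using mcontD(1)[OF F, of t] mcontD(1)[OF G, of t] ij by (simp add: scalar_prod_def)
  moreover have "continuous (at 0) (\<lambda>t. \<Sum>l\<in>{0..<k}. F t $$ (i,l) * G t $$ (l,j))"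
    by (intro continuous_sum continuous_mult mcontD(2)[OF F] mcontD(2)[OF G]) (use ij in auto)
  ultimately show "continuous (at 0) (\<lambda>t. (F t * G t) $$ (i, j))" by simp
qed

lemma mcont_adj: assumes F: "mcont F r c" shows "mcont (\<lambda>t. mat_adjoint (F t)) c r"
  unfolding mcont_def
proof (intro conjI allI impI)
  fix t show "mat_adjoint (F t) \<in> carrier_mat c r" using mcontD(1)[OF F, of t] by simp
next
  fix i j assume ij: "i < c" "j < r"
  have "mat_adjoint (F t) $$ (i,j) = cnj (F t $$ (j,i))"
    for t using mcontD(1)[OF F, of t] ij by simp
  then show "continuous (at 0) (\<lambda>t. mat_adjoint (F t) $$ (i, j))"
    using continuous_cnj[OF mcontD(2)[OF F ij(2,1)]] by simp
qed

lemma mcont_blk: assumes F: "mcont F (sum_list ns) (sum_list ns)" and i: "i < length ns" and j: "j < length ns"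
  shows "mcont (\<lambda>t. blk ns (F t) i j) (ns ! i) (ns ! j)"
  unfolding mcont_def
proof (intro conjI allI impI)
  fix t show "blk ns (F t) i j \<in> carrier_mat (ns ! i) (ns ! j)" by simp
next
  fix a b assume ab: "a < ns ! i" "b < ns ! j"
  have "blk ns (F t) i j $$ (a,b) = F t $$ (blk_off ns i + a, blk_off ns j + b)"
    for t using ab by simp
  moreover have "blk_off ns i + a < sum_list ns" "blk_off ns j + b < sum_list ns"
    using blk_off_le[OF i] blk_off_le[OF j] ab by linarith+
  ultimately show "continuous (at 0) (\<lambda>t. blk ns (F t) i j $$ (a, b))"
    using mcontD(2)[OF F] by simp
qed

lemma mcont_blk_tilde: assumes F: "mcont F (sum_list ns) (sum_list ns)" and i: "i < length ns" and j: "j < length ns"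
  shows "mcont (\<lambda>t. blk_tilde ns (F t) i j) (ns ! i) (ns ! j)"
proof (cases "i < j")
  case True then show ?thesis unfolding blk_tilde_def using mcont_blk[OF F i j] by simp
next
  case False then show ?thesis unfolding blk_tilde_def using mcont_adj[OF mcont_blk[OF F j i]] by simp
qed

lemma mcont_A_path: assumes F: "mcont F (sum_list ns) (sum_list ns)"
  shows "good_path ns path \<Longrightarrow> mcont (\<lambda>t. A_path ns (F t) path) (ns ! hd path) (ns ! last path)"
proof (induction path rule: induct_list012)
  case 1
  then show ?case by (simp add: good_path_def)
next
  case (2 i)
  then show ?case using mcont_const[of "1\<^sub>m (ns ! i)"] by simp
next
  case (3 i j rest)
  from good_path_tail[OF "3.prems"] have g: "good_path ns (j # rest)" and ij: "i \<noteq> j"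
    and i: "i < length ns" and j: "j < length ns" by auto
  have IH: "mcont (\<lambda>t. A_path ns (F t) (j # rest)) (ns ! j) (ns ! last (j # rest))"
    using "3.IH"(2)[OF g] by simp
  have "mcont (\<lambda>t. blk_tilde ns (F t) i j * A_path ns (F t) (j # rest)) (ns ! i) (ns ! last (j # rest))"
    using mcont_mult[OF mcont_blk_tilde[OF F i j] IH] by simp
  then show ?case by simp
qed

lemma cont_det: assumes F: "mcont F m m" shows "continuous (at 0) (\<lambda>t. det (F t))"
proof -
  have "det (F t) = (\<Sum>p\<in>{p. p permutes {0..<m}}. signof p * (\<Prod>i = 0..<m. F t $$ (i, p i)))"
    for t using det_def'[OF mcontD(1)[OF F, of t]] by simp
  moreover have "continuous (at 0) (\<lambda>t. \<Sum>p\<in>{p. p permutes {0..<m}}. signof p * (\<Prod>i = 0..<m. F t $$ (i, p i)))"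
  proof (intro continuous_sum continuous_mult continuous_const continuous_prod)
    fix p i assume p: "p \<in> {p. p permutes {0..<m}}" and i: "i \<in> {0..<m}"
    then have "p i < m" using permutes_in_image[of p "{0..<m}" i] by auto
    then show "continuous (at 0) (\<lambda>t. F t $$ (i, p i))" using mcontD(2)[OF F] i by simp
  qed
  ultimately show ?thesis by simp
qed

lemma mcont_delete: assumes F: "mcont F m m" and i: "i < m" and j: "j < m"
  shows "mcont (\<lambda>t. mat_delete (F t) i j) (m - 1) (m - 1)"
  unfolding mcont_def
proof (intro conjI allI impI)
  fix t show "mat_delete (F t) i j \<in> carrier_mat (m - 1) (m - 1)"
    by (rule mat_delete_carrier[OF mcontD(1)[OF F]])
next
  fix a b assume ab: "a < m - 1" "b < m - 1"
  have "mat_delete (F t) i j $$ (a,b) = F t $$ (if a < i then a else Suc a, if b < j then b else Suc b)"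
    for t using ab mcontD(1)[OF F, of t] by (simp add: mat_delete_def)
  moreover have "(if a < i then a else Suc a) < m" "(if b < j then b else Suc b) < m" using ab by auto
  ultimately show "continuous (at 0) (\<lambda>t. mat_delete (F t) i j $$ (a, b))"
    using mcontD(2)[OF F] by simp
qed

lemma mcont_adj_mat: assumes F: "mcont F m m" shows "mcont (\<lambda>t. adj_mat (F t)) m m"
  unfolding mcont_def
proof (intro conjI allI impI)
  fix t show "adj_mat (F t) \<in> carrier_mat m m" by (rule adj_mat(1)[OF mcontD(1)[OF F, of t]])
next
  fix a b assume ab: "a < m" "b < m"
  have "adj_mat (F t) $$ (a,b) = (-1)^(b+a) * det (mat_delete (F t) b a)"
    for t using ab mcontD(1)[OF F, of t] by (simp add: adj_mat_def cofactor_def)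
  moreover have "continuous (at 0) (\<lambda>t. (-1)^(b+a) * det (mat_delete (F t) b a))"
    by (intro continuous_mult continuous_const cont_det[OF mcont_delete[OF F ab(2) ab(1)]])
  ultimately show "continuous (at 0) (\<lambda>t. adj_mat (F t) $$ (a, b))" by simp
qed


lemma expand2: assumes A: "(A::complex mat) \<in> carrier_mat n n" and B: "B \<in> carrier_mat n n"
  shows "(2 \<cdot>\<^sub>m A - 1\<^sub>m n) * (2 \<cdot>\<^sub>m B - 1\<^sub>m n) = 4 \<cdot>\<^sub>m (A * B) - 2 \<cdot>\<^sub>m A - 2 \<cdot>\<^sub>m B + 1\<^sub>m n"
proof -
  have A2: "2 \<cdot>\<^sub>m A \<in> carrier_mat n n" and B2: "2 \<cdot>\<^sub>m B \<in> carrier_mat n n" using A B by auto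
  have B21: "2 \<cdot>\<^sub>m B - 1\<^sub>m n \<in> carrier_mat n n" using B by simp
  have "(2 \<cdot>\<^sub>m A - 1\<^sub>m n) * (2 \<cdot>\<^sub>m B - 1\<^sub>m n) = (2 \<cdot>\<^sub>m A) * (2 \<cdot>\<^sub>m B - 1\<^sub>m n) - 1\<^sub>m n * (2 \<cdot>\<^sub>m B - 1\<^sub>m n)"
    by (rule minus_mult_distrib_mat[OF A2 one_carrier_mat B21])
  also have "(2 \<cdot>\<^sub>m A) * (2 \<cdot>\<^sub>m B - 1\<^sub>m n) = 2 \<cdot>\<^sub>m (A * (2 \<cdot>\<^sub>m B - 1\<^sub>m n))"
    by (rule mult_smult_assoc_mat[OF A B21])
  also have "A * (2 \<cdot>\<^sub>m B - 1\<^sub>m n) = A * (2 \<cdot>\<^sub>m B) - A * 1\<^sub>m n"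
    by (rule mult_minus_distrib_mat[OF A B2 one_carrier_mat])
  also have "A * (2 \<cdot>\<^sub>m B) = 2 \<cdot>\<^sub>m (A * B)" by (rule mult_smult_distrib[OF A B])
  also have "A * 1\<^sub>m n = A" using A by simp
  also have "1\<^sub>m n * (2 \<cdot>\<^sub>m B - 1\<^sub>m n) = 2 \<cdot>\<^sub>m B - 1\<^sub>m n" using B21 by simp
  finally have e: "(2 \<cdot>\<^sub>m A - 1\<^sub>m n) * (2 \<cdot>\<^sub>m B - 1\<^sub>m n) = 2 \<cdot>\<^sub>m (2 \<cdot>\<^sub>m (A * B) - A) - (2 \<cdot>\<^sub>m B - 1\<^sub>m n)" .
  have AB: "A * B \<in> carrier_mat n n" using A B by simp
  show ?thesis unfolding e
    by (rule eq_matI) (use A B AB carrier_matD[OF AB] in \<open>auto simp del: index_mult_mat\<close>)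
qed

lemma expand3: assumes A: "(A::complex mat) \<in> carrier_mat n n" and B: "B \<in> carrier_mat n n"
  and J: "J \<in> carrier_mat n n"
  shows "(2 \<cdot>\<^sub>m A - 1\<^sub>m n) * J * (2 \<cdot>\<^sub>m B - 1\<^sub>m n) = 4 \<cdot>\<^sub>m (A * J * B) - 2 \<cdot>\<^sub>m (A * J) - 2 \<cdot>\<^sub>m (J * B) + J"
proof -
  have A2: "2 \<cdot>\<^sub>m A \<in> carrier_mat n n" and B2: "2 \<cdot>\<^sub>m B \<in> carrier_mat n n" using A B by auto
  have B21: "2 \<cdot>\<^sub>m B - 1\<^sub>m n \<in> carrier_mat n n" using B by simp
  have AJ: "A * J \<in> carrier_mat n n" using A J by simp
  have "(2 \<cdot>\<^sub>m A - 1\<^sub>m n) * J = (2 \<cdot>\<^sub>m A) * J - 1\<^sub>m n * J"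
    by (rule minus_mult_distrib_mat[OF A2 one_carrier_mat J])
  also have "(2 \<cdot>\<^sub>m A) * J = 2 \<cdot>\<^sub>m (A * J)" by (rule mult_smult_assoc_mat[OF A J])
  also have "1\<^sub>m n * J = J" by (rule left_mult_one_mat[OF J])
  finally have e1: "(2 \<cdot>\<^sub>m A - 1\<^sub>m n) * J = 2 \<cdot>\<^sub>m (A * J) - J" .
  have AJ2: "2 \<cdot>\<^sub>m (A * J) \<in> carrier_mat n n" using AJ by simp
  have "(2 \<cdot>\<^sub>m (A * J) - J) * (2 \<cdot>\<^sub>m B - 1\<^sub>m n) = (2 \<cdot>\<^sub>m (A * J)) * (2 \<cdot>\<^sub>m B - 1\<^sub>m n) - J * (2 \<cdot>\<^sub>m B - 1\<^sub>m n)"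
    by (rule minus_mult_distrib_mat[OF AJ2 J B21])
  also have "(2 \<cdot>\<^sub>m (A * J)) * (2 \<cdot>\<^sub>m B - 1\<^sub>m n) = 2 \<cdot>\<^sub>m ((A * J) * (2 \<cdot>\<^sub>m B - 1\<^sub>m n))"
    by (rule mult_smult_assoc_mat[OF AJ B21])
  also have "(A * J) * (2 \<cdot>\<^sub>m B - 1\<^sub>m n) = (A * J) * (2 \<cdot>\<^sub>m B) - (A * J) * 1\<^sub>m n"
    by (rule mult_minus_distrib_mat[OF AJ B2 one_carrier_mat])
  also have "(A * J) * (2 \<cdot>\<^sub>m B) = 2 \<cdot>\<^sub>m (A * J * B)" by (rule mult_smult_distrib[OF AJ B])
  also have "(A * J) * 1\<^sub>m n = A * J" by (rule right_mult_one_mat[OF AJ])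
  also have "J * (2 \<cdot>\<^sub>m B - 1\<^sub>m n) = J * (2 \<cdot>\<^sub>m B) - J * 1\<^sub>m n"
    by (rule mult_minus_distrib_mat[OF J B2 one_carrier_mat])
  also have "J * (2 \<cdot>\<^sub>m B) = 2 \<cdot>\<^sub>m (J * B)" by (rule mult_smult_distrib[OF J B])
  also have "J * 1\<^sub>m n = J" by (rule right_mult_one_mat[OF J])
  finally have e2: "(2 \<cdot>\<^sub>m (A * J) - J) * (2 \<cdot>\<^sub>m B - 1\<^sub>m n) = 2 \<cdot>\<^sub>m (2 \<cdot>\<^sub>m (A * J * B) - A * J) - (2 \<cdot>\<^sub>m (J * B) - J)" .
  have AJB: "A * J * B \<in> carrier_mat n n" and JB: "J * B \<in> carrier_mat n n" using A B J by auto
  show ?thesis unfolding e1 e2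
    by (rule eq_matI) (use A B J AJ AJB JB carrier_matD[OF AJ] carrier_matD[OF AJB] carrier_matD[OF JB] in \<open>auto simp del: index_mult_mat\<close>)
qed

lemma scal1: assumes "v = x - c*z" "w = x + c*z" shows "4*x - 2*v - 2*w + d = (d::complex)"
  unfolding assms by (simp add: algebra_simps)

lemma scal2: assumes "jv = m - c*ym" "wj = m + c*my" "ym = (1/2)*xm" "my = (1/2)*mx"
  shows "4*m - 2*wj - 2*jv + j = j + c*(xm - (mx::complex))"
  unfolding assms by (simp add: algebra_simps)

lemma mat_entry_eq: "A = B \<Longrightarrow> A $$ (i, j) = B $$ (i, j)" by simp

lemma cayley:
  fixes X W J :: "complex mat" and c :: complex
  assumes X: "X \<in> carrier_mat n n" and W: "W \<in> carrier_mat n n" and J: "J \<in> carrier_mat n n"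
    and Xadj: "mat_adjoint X = - X" and c: "cnj c = c"
    and SW: "(1\<^sub>m n - c \<cdot>\<^sub>m ((1/2) \<cdot>\<^sub>m X)) * W = 1\<^sub>m n"
    and WS: "W * (1\<^sub>m n - c \<cdot>\<^sub>m ((1/2) \<cdot>\<^sub>m X)) = 1\<^sub>m n"
  shows "mat_adjoint (2 \<cdot>\<^sub>m W - 1\<^sub>m n) * (2 \<cdot>\<^sub>m W - 1\<^sub>m n) = 1\<^sub>m n"
    and "(2 \<cdot>\<^sub>m W - 1\<^sub>m n) * J * mat_adjoint (2 \<cdot>\<^sub>m W - 1\<^sub>m n)
         = J + c \<cdot>\<^sub>m (X * (W * J * mat_adjoint W) - (W * J * mat_adjoint W) * X)"
proof -
  define Y where "Y = (1/2) \<cdot>\<^sub>m X"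
  define V where "V = mat_adjoint W"
  define M where "M = W * J * V"
  have Y: "Y \<in> carrier_mat n n" using X by (simp add: Y_def)
  have V: "V \<in> carrier_mat n n" using W by (simp add: V_def)
  have Yadj: "mat_adjoint Y = - Y"
    unfolding Y_def adj_smult Xadj by (rule eq_matI) (use X in auto)
  have cY: "c \<cdot>\<^sub>m Y \<in> carrier_mat n n" using Y by simp
  have YW: "Y * W \<in> carrier_mat n n" and WY: "W * Y \<in> carrier_mat n n"
    and VY: "V * Y \<in> carrier_mat n n" and YV: "Y * V \<in> carrier_mat n n"
    and VW: "V * W \<in> carrier_mat n n" and WJ: "W * J \<in> carrier_mat n n"
    and JV: "J * V \<in> carrier_mat n n" and M: "M \<in> carrier_mat n n"
    using Y W V J by (auto simp: M_def)
  have YM: "Y * M \<in> carrier_mat n n" and MY: "M * Y \<in> carrier_mat n n"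
    and XM: "X * M \<in> carrier_mat n n" and MX: "M * X \<in> carrier_mat n n"
    using Y M X by auto
  have Z: "V * (Y * W) \<in> carrier_mat n n" using V YW by simp
  note dims = carrier_matD[OF X] carrier_matD[OF W] carrier_matD[OF J] carrier_matD[OF Y]
    carrier_matD[OF V] carrier_matD[OF YW] carrier_matD[OF WY] carrier_matD[OF VY]
    carrier_matD[OF YV] carrier_matD[OF VW] carrier_matD[OF WJ] carrier_matD[OF JV]
    carrier_matD[OF M] carrier_matD[OF YM] carrier_matD[OF MY] carrier_matD[OF XM]
    carrier_matD[OF MX] carrier_matD[OF Z]
  have "(1\<^sub>m n - c \<cdot>\<^sub>m Y) * W = 1\<^sub>m n * W - (c \<cdot>\<^sub>m Y) * W"
    by (rule minus_mult_distrib_mat[OF one_carrier_mat cY W])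
  also have "(c \<cdot>\<^sub>m Y) * W = c \<cdot>\<^sub>m (Y * W)" by (rule mult_smult_assoc_mat[OF Y W])
  also have "1\<^sub>m n * W = W" by (rule left_mult_one_mat[OF W])
  finally have a: "W - c \<cdot>\<^sub>m (Y * W) = 1\<^sub>m n" using SW by (simp add: Y_def)
  have "W * (1\<^sub>m n - c \<cdot>\<^sub>m Y) = W * 1\<^sub>m n - W * (c \<cdot>\<^sub>m Y)"
    by (rule mult_minus_distrib_mat[OF W one_carrier_mat cY])
  also have "W * (c \<cdot>\<^sub>m Y) = c \<cdot>\<^sub>m (W * Y)" by (rule mult_smult_distrib[OF W Y])
  also have "W * 1\<^sub>m n = W" by (rule right_mult_one_mat[OF W])
  finally have b: "W - c \<cdot>\<^sub>m (W * Y) = 1\<^sub>m n" using WS by (simp add: Y_def)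
  have "mat_adjoint (W - c \<cdot>\<^sub>m (Y * W)) = V - c \<cdot>\<^sub>m (V * mat_adjoint Y)"
    unfolding V_def using adj_minus[OF W smult_carrier_mat[OF YW]] adj_smult adj_mult[OF Y W] c by simp
  then have c0: "V - c \<cdot>\<^sub>m (V * - Y) = 1\<^sub>m n" using a Yadj by simp
  have cc: "V + c \<cdot>\<^sub>m (V * Y) = 1\<^sub>m n"
  proof (rule eq_matI)
    fix i j assume ij: "i < dim_row (1\<^sub>m n :: complex mat)" "j < dim_col (1\<^sub>m n :: complex mat)"
    have "(V - c \<cdot>\<^sub>m (V * - Y)) $$ (i,j) = 1\<^sub>m n $$ (i,j)" using c0 by simp
    then show "(V + c \<cdot>\<^sub>m (V * Y)) $$ (i, j) = 1\<^sub>m n $$ (i, j)"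
      using ij dims by (simp del: index_mult_mat)
  qed (use dims in auto)
  have "V * (W - c \<cdot>\<^sub>m (Y * W)) = V * W - V * (c \<cdot>\<^sub>m (Y * W))"
    by (rule mult_minus_distrib_mat[OF V W smult_carrier_mat[OF YW]])
  also have "V * (c \<cdot>\<^sub>m (Y * W)) = c \<cdot>\<^sub>m (V * (Y * W))" by (rule mult_smult_distrib[OF V YW])
  finally have u1: "V * W - c \<cdot>\<^sub>m (V * (Y * W)) = V" using a right_mult_one_mat[OF V] by simp
  have "(V + c \<cdot>\<^sub>m (V * Y)) * W = V * W + (c \<cdot>\<^sub>m (V * Y)) * W"
    by (rule add_mult_distrib_mat[OF V smult_carrier_mat[OF VY] W])
  also have "(c \<cdot>\<^sub>m (V * Y)) * W = c \<cdot>\<^sub>m ((V * Y) * W)" by (rule mult_smult_assoc_mat[OF VY W])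
  also have "(V * Y) * W = V * (Y * W)" by (rule assoc_mult_mat[OF V Y W])
  finally have u2: "V * W + c \<cdot>\<^sub>m (V * (Y * W)) = W" using cc left_mult_one_mat[OF W] by simp
  have adjg: "mat_adjoint (2 \<cdot>\<^sub>m W - 1\<^sub>m n) = 2 \<cdot>\<^sub>m V - 1\<^sub>m n"
    unfolding V_def using adj_minus[OF smult_carrier_mat[OF W] one_carrier_mat] adj_smult by simp
  show "mat_adjoint (2 \<cdot>\<^sub>m W - 1\<^sub>m n) * (2 \<cdot>\<^sub>m W - 1\<^sub>m n) = 1\<^sub>m n"
    unfolding adjg expand2[OF V W]
  proof (rule eq_matI)
    fix i j assume ij: "i < dim_row (1\<^sub>m n :: complex mat)" "j < dim_col (1\<^sub>m n :: complex mat)"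
    have e1: "(V * W - c \<cdot>\<^sub>m (V * (Y * W))) $$ (i,j) = V $$ (i,j)" using u1 by simp
    have e2: "(V * W + c \<cdot>\<^sub>m (V * (Y * W))) $$ (i,j) = W $$ (i,j)" using u2 by simp
    have E1: "V $$ (i,j) = (V * W) $$ (i,j) - c * (V * (Y * W)) $$ (i,j)"
      using e1 ij dims by (simp del: index_mult_mat)
    have E2: "W $$ (i,j) = (V * W) $$ (i,j) + c * (V * (Y * W)) $$ (i,j)"
      using e2 ij dims by (simp del: index_mult_mat)
    have G: "(4 \<cdot>\<^sub>m (V * W) - 2 \<cdot>\<^sub>m V - 2 \<cdot>\<^sub>m W + 1\<^sub>m n) $$ (i, j)
      = 4 * (V * W) $$ (i,j) - 2 * V $$ (i,j) - 2 * W $$ (i,j) + 1\<^sub>m n $$ (i, j)"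
      using ij dims by (simp del: index_mult_mat)
    show "(4 \<cdot>\<^sub>m (V * W) - 2 \<cdot>\<^sub>m V - 2 \<cdot>\<^sub>m W + 1\<^sub>m n) $$ (i, j) = 1\<^sub>m n $$ (i, j)"
      unfolding G by (rule scal1[OF E1 E2])
  qed (use dims in auto)
  have "(W - c \<cdot>\<^sub>m (Y * W)) * (J * V) = W * (J * V) - (c \<cdot>\<^sub>m (Y * W)) * (J * V)"
    by (rule minus_mult_distrib_mat[OF W smult_carrier_mat[OF YW] JV])
  also have "(c \<cdot>\<^sub>m (Y * W)) * (J * V) = c \<cdot>\<^sub>m ((Y * W) * (J * V))" by (rule mult_smult_assoc_mat[OF YW JV])
  also have "(Y * W) * (J * V) = Y * (W * (J * V))" by (rule assoc_mult_mat[OF Y W JV])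
  also have "W * (J * V) = M" unfolding M_def by (rule assoc_mult_mat[OF W J V, symmetric])
  finally have f: "M - c \<cdot>\<^sub>m (Y * M) = J * V" using a left_mult_one_mat[OF JV] by simp
  have "(W * J) * (V + c \<cdot>\<^sub>m (V * Y)) = (W * J) * V + (W * J) * (c \<cdot>\<^sub>m (V * Y))"
    by (rule mult_add_distrib_mat[OF WJ V smult_carrier_mat[OF VY]])
  also have "(W * J) * (c \<cdot>\<^sub>m (V * Y)) = c \<cdot>\<^sub>m ((W * J) * (V * Y))" by (rule mult_smult_distrib[OF WJ VY])
  also have "(W * J) * (V * Y) = ((W * J) * V) * Y" by (rule assoc_mult_mat[OF WJ V Y, symmetric])
  finally have g: "M + c \<cdot>\<^sub>m (M * Y) = W * J" using cc right_mult_one_mat[OF WJ] by (simp add: M_def)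
  have YMe: "Y * M = (1/2) \<cdot>\<^sub>m (X * M)" unfolding Y_def by (rule mult_smult_assoc_mat[OF X M])
  have MYe: "M * Y = (1/2) \<cdot>\<^sub>m (M * X)" unfolding Y_def by (rule mult_smult_distrib[OF M X])
  show "(2 \<cdot>\<^sub>m W - 1\<^sub>m n) * J * mat_adjoint (2 \<cdot>\<^sub>m W - 1\<^sub>m n)
         = J + c \<cdot>\<^sub>m (X * (W * J * mat_adjoint W) - (W * J * mat_adjoint W) * X)"
    unfolding adjg expand3[OF W V J] V_def[symmetric] M_def[symmetric]
  proof (rule eq_matI)
    fix i j assume ij: "i < dim_row (J + c \<cdot>\<^sub>m (X * M - M * X))" "j < dim_col (J + c \<cdot>\<^sub>m (X * M - M * X))"
    then have ij': "i < n" "j < n" using dims by auto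
    have e1: "(M - c \<cdot>\<^sub>m (Y * M)) $$ (i,j) = (J * V) $$ (i,j)" using f by simp
    have e2: "(M + c \<cdot>\<^sub>m (M * Y)) $$ (i,j) = (W * J) $$ (i,j)" using g by simp
    have e3: "(Y * M) $$ (i,j) = ((1/2) \<cdot>\<^sub>m (X * M)) $$ (i,j)" using YMe by simp
    have e4: "(M * Y) $$ (i,j) = ((1/2) \<cdot>\<^sub>m (M * X)) $$ (i,j)" using MYe by simp
    have E1: "(J * V) $$ (i,j) = M $$ (i,j) - c * (Y * M) $$ (i,j)"
      using e1 ij' dims by (simp del: index_mult_mat)
    have E2: "(W * J) $$ (i,j) = M $$ (i,j) + c * (M * Y) $$ (i,j)"
      using e2 ij' dims by (simp del: index_mult_mat)
    have E3: "(Y * M) $$ (i,j) = (1/2) * (X * M) $$ (i,j)"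
      using e3 ij' dims by (simp del: index_mult_mat)
    have E4: "(M * Y) $$ (i,j) = (1/2) * (M * X) $$ (i,j)"
      using e4 ij' dims by (simp del: index_mult_mat)
    have G1: "(4 \<cdot>\<^sub>m M - 2 \<cdot>\<^sub>m (W * J) - 2 \<cdot>\<^sub>m (J * V) + J) $$ (i, j)
       = 4 * M $$ (i,j) - 2 * (W * J) $$ (i,j) - 2 * (J * V) $$ (i,j) + J $$ (i,j)"
      using ij' dims by (simp del: index_mult_mat)
    have G2: "(J + c \<cdot>\<^sub>m (X * M - M * X)) $$ (i, j) = J $$ (i,j) + c * ((X * M) $$ (i,j) - (M * X) $$ (i,j))"
      using ij' dims by (simp del: index_mult_mat)
    show "(4 \<cdot>\<^sub>m M - 2 \<cdot>\<^sub>m (W * J) - 2 \<cdot>\<^sub>m (J * V) + J) $$ (i, j) = (J + c \<cdot>\<^sub>m (X * M - M * X)) $$ (i, j)"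
      unfolding G1 G2 by (rule scal2[OF E1 E2 E3 E4])
  qed (use dims in auto)
qed


lemma real_lim0: fixes F :: "real \<Rightarrow> complex"
  assumes c: "continuous (at 0) F" and e: "eventually (\<lambda>t. F t \<in> \<real>) (at 0)"
  shows "F 0 \<in> \<real>"
proof -
  have t1: "((\<lambda>t. Im (F t)) \<longlongrightarrow> Im (F 0)) (at 0)"
    using c unfolding continuous_at by (intro tendsto_Im)
  have "eventually (\<lambda>t. Im (F t) = 0) (at 0)"
    using e by (rule eventually_mono) (simp add: complex_is_Real_iff)
  then have t2: "((\<lambda>t. Im (F t)) \<longlongrightarrow> 0) (at (0::real))" by (rule tendsto_eventually)
  have "Im (F 0) = 0" using tendsto_unique[OF _ t1 t2] by simp
  then show ?thesis by (simp add: complex_is_Real_iff)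
qed


lemma conj_reduce:
  fixes a b c J :: "complex mat"
  assumes a: "a \<in> carrier_mat n n" and b: "b \<in> carrier_mat n n" and c: "c \<in> carrier_mat n n"
    and J: "J \<in> carrier_mat n n" and aa: "mat_adjoint a * a = 1\<^sub>m n" and cc: "mat_adjoint c * c = 1\<^sub>m n"
    and cJ: "c * J = J * c"
  shows "mat_adjoint a * (a * b * c * J * mat_adjoint (a * b * c)) * a = b * J * mat_adjoint b"
proof -
  have a': "mat_adjoint a \<in> carrier_mat n n" and b': "mat_adjoint b \<in> carrier_mat n n"
    and c': "mat_adjoint c \<in> carrier_mat n n" using a b c by auto
  have ab: "a * b \<in> carrier_mat n n" using a b by simp
  have abJ: "a * b * J \<in> carrier_mat n n" using ab J by simp
  have c_c: "c * mat_adjoint c = 1\<^sub>m n" by (rule unitary_right[OF c cc])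
  have cb: "mat_adjoint c * mat_adjoint b \<in> carrier_mat n n" using c' b' by simp
  have ba: "mat_adjoint b * mat_adjoint a \<in> carrier_mat n n" using b' a' by simp
  have bJ: "b * J \<in> carrier_mat n n" using b J by simp
  have adj3: "mat_adjoint (a * b * c) = mat_adjoint c * mat_adjoint b * mat_adjoint a"
    using adj_mult[OF ab c] adj_mult[OF a b] assoc_mult_mat[OF c' b' a'] by simp
  have "a * b * c * J = (a * b) * (c * J)" by (rule assoc_mult_mat[OF ab c J])
  also have "\<dots> = (a * b) * (J * c)" using cJ by simp
  also have "\<dots> = a * b * J * c" by (rule assoc_mult_mat[OF ab J c, symmetric])
  finally have e1: "a * b * c * J = a * b * J * c" .
  have "a * b * c * J * mat_adjoint (a * b * c) = (a * b * J * c) * (mat_adjoint c * mat_adjoint b * mat_adjoint a)"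
    using e1 adj3 by simp
  also have "\<dots> = (a * b * J) * (c * (mat_adjoint c * mat_adjoint b * mat_adjoint a))"
    by (rule assoc_mult_mat[OF abJ c mult_carrier_mat[OF cb a']])
  also have "c * (mat_adjoint c * mat_adjoint b * mat_adjoint a) = (c * (mat_adjoint c * mat_adjoint b)) * mat_adjoint a"
    by (rule assoc_mult_mat[OF c cb a', symmetric])
  also have "c * (mat_adjoint c * mat_adjoint b) = (c * mat_adjoint c) * mat_adjoint b"
    by (rule assoc_mult_mat[OF c c' b', symmetric])
  also have "(c * mat_adjoint c) * mat_adjoint b = mat_adjoint b" using c_c left_mult_one_mat[OF b'] by simp
  finally have P: "a * b * c * J * mat_adjoint (a * b * c) = (a * b * J) * (mat_adjoint b * mat_adjoint a)" .
  have "mat_adjoint a * ((a * b * J) * (mat_adjoint b * mat_adjoint a)) = (mat_adjoint a * (a * b * J)) * (mat_adjoint b * mat_adjoint a)"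
    by (rule assoc_mult_mat[OF a' abJ ba, symmetric])
  also have "mat_adjoint a * (a * b * J) = (mat_adjoint a * (a * b)) * J"
    by (rule assoc_mult_mat[OF a' ab J, symmetric])
  also have "mat_adjoint a * (a * b) = (mat_adjoint a * a) * b"
    by (rule assoc_mult_mat[OF a' a b, symmetric])
  also have "(mat_adjoint a * a) * b = b" using aa left_mult_one_mat[OF b] by simp
  finally have Q: "mat_adjoint a * ((a * b * J) * (mat_adjoint b * mat_adjoint a)) = (b * J) * (mat_adjoint b * mat_adjoint a)" .
  have "(b * J) * (mat_adjoint b * mat_adjoint a) * a = (b * J) * ((mat_adjoint b * mat_adjoint a) * a)"
    by (rule assoc_mult_mat[OF bJ ba a])
  also have "(mat_adjoint b * mat_adjoint a) * a = mat_adjoint b * (mat_adjoint a * a)"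
    by (rule assoc_mult_mat[OF b' a' a])
  also have "mat_adjoint b * (mat_adjoint a * a) = mat_adjoint b" using aa right_mult_one_mat[OF b'] by simp
  finally have R: "(b * J) * (mat_adjoint b * mat_adjoint a) * a = b * J * mat_adjoint b" .
  show ?thesis unfolding P Q R ..
qed

lemma step_A:
  fixes J g :: "complex mat" and path ns :: "nat list"
  defines "N \<equiv> sum_list ns"
  assumes bd: "block_diagonal ns J" and J: "J \<in> carrier_mat N N" and JR: "real_mat J"
    and a: "a \<in> block_unitary_group ns" and b: "b \<in> orthogonal_group N" and c: "c \<in> centralizer_group N J"
    and gp: "good_path ns path" and cl: "hd path = last path" and x: "x \<in> \<real>"
  shows "det (x \<cdot>\<^sub>m 1\<^sub>m (ns ! hd path) - A_path ns ((a * b * c) * J * mat_adjoint (a * b * c)) path) \<in> \<real>"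
proof -
  have ac: "a \<in> carrier_mat N N" and aa: "mat_adjoint a * a = 1\<^sub>m N" and bda: "block_diagonal ns a"
    using a by (auto simp: block_unitary_group_def unitary_group_def N_def)
  have bc: "b \<in> carrier_mat N N" and bR: "real_mat b"
    using b by (auto simp: orthogonal_group_def)
  have cc: "c \<in> carrier_mat N N" and cu: "mat_adjoint c * c = 1\<^sub>m N" and cJ: "c * J = J * c"
    using c by (auto simp: centralizer_group_def unitary_group_def)
  define P where "P = (a * b * c) * J * mat_adjoint (a * b * c)"
  have abc: "a * b * c \<in> carrier_mat N N" using ac bc cc by simp
  have Pc: "P \<in> carrier_mat N N" unfolding P_def
    by (rule mult_carrier_mat[OF mult_carrier_mat[OF abc J] adj_carrier[OF abc]])
  have R: "mat_adjoint a * P * a = b * J * mat_adjoint b"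
    unfolding P_def by (rule conj_reduce[OF ac bc cc J aa cu cJ])
  have Rr: "real_mat (mat_adjoint a * P * a)" unfolding R
    by (rule real_mat_mult[OF real_mat_mult[OF bR JR bc J] real_mat_adj[OF bR] mult_carrier_mat[OF bc J] adj_carrier[OF bc]])
  have Rc: "mat_adjoint a * P * a \<in> carrier_mat N N"
    by (rule mult_carrier_mat[OF mult_carrier_mat[OF adj_carrier[OF ac] Pc] ac])
  have i0: "hd path < length ns" using gp unfolding good_path_def by auto
  let ?a0 = "blk ns a (hd path) (hd path)"
  have A_eq: "A_path ns (mat_adjoint a * P * a) path = mat_adjoint ?a0 * A_path ns P path * ?a0"
    using A_path_conj[OF bda ac[unfolded N_def] aa[unfolded N_def] Pc[unfolded N_def] gp] cl by simp
  have AP: "A_path ns P path \<in> carrier_mat (ns ! hd path) (ns ! hd path)"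
    using A_path_carrier[of path ns P] gp cl unfolding good_path_def by simp
  have AR: "A_path ns (mat_adjoint a * P * a) path \<in> carrier_mat (ns ! hd path) (ns ! hd path)"
    using A_path_carrier[of path ns] gp cl unfolding good_path_def by simp
  have "det (x \<cdot>\<^sub>m 1\<^sub>m (ns ! hd path) - A_path ns (mat_adjoint a * P * a) path) \<in> \<real>"
    by (rule real_det[OF real_mat_A_path[OF Rr Rc[unfolded N_def] gp] AR x])
  then show ?thesis unfolding A_eq P_def[symmetric]
    using det_conj[OF blk_carrier AP blk_unitary(1)[OF bda ac[unfolded N_def] aa[unfolded N_def] i0]] by simp
qed


theorem lemma6p3:
  fixes ns :: "nat list" and J X :: "complex mat" and path :: "nat list"
  defines "n \<equiv> sum_list ns"
  assumes pos: "\<forall>m \<in> set ns. 0 < m"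
    and J_carrier: "J \<in> carrier_mat n n" and J_real: "real_mat J"
    and J_blockdiag: "block_diagonal ns J"
    and X_carrier: "X \<in> carrier_mat n n" and X_skew: "mat_adjoint X = - X"
    and path_len: "length path \<ge> 3"
    and path_range: "\<forall>i \<in> set path. i < length ns"
    and path_closed: "hd path = last path"
    and path_distinct: "\<forall>a. Suc a < length path \<longrightarrow> path ! a \<noteq> path ! Suc a"
    and nonreal: "\<not> real_poly (char_poly (A_path ns (commutator X J) path))"
  shows "\<not> (\<forall>g \<in> unitary_group n. \<exists>a \<in> block_unitary_group ns. \<exists>b \<in> orthogonal_group n.
             \<exists>c \<in> centralizer_group n J. g = a * b * c)"
proof
  assume H: "\<forall>g \<in> unitary_group n. \<exists>a \<in> block_unitary_group ns. \<exists>b \<in> orthogonal_group n.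
             \<exists>c \<in> centralizer_group n J. g = a * b * c"
  have gp: "good_path ns path"
    unfolding good_path_def using path_len path_range path_distinct by auto
  define m where "m = ns ! hd path"
  define l where "l = length path - 1"
  have Jc: "J \<in> carrier_mat (sum_list ns) (sum_list ns)" using J_carrier by (simp add: n_def)
  have SA: "det (x \<cdot>\<^sub>m 1\<^sub>m m - A_path ns (g * J * mat_adjoint g) path) \<in> \<real>"
    if g: "g \<in> unitary_group n" and x: "x \<in> \<real>" for g x
  proof -
    from H g obtain a b c where a: "a \<in> block_unitary_group ns" and b: "b \<in> orthogonal_group n"
      and c: "c \<in> centralizer_group n J" and gabc: "g = a * b * c" by blast
    show ?thesis unfolding gabc m_def
      by (rule step_A[OF J_blockdiag Jc J_real a b[unfolded n_def] c[unfolded n_def] gp path_closed x])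
  qed
  have AC: "A_path ns P path \<in> carrier_mat m m" for P
    using A_path_carrier[of path ns P] gp path_closed unfolding good_path_def m_def by simp
  define Y where "Y = (1/2::complex) \<cdot>\<^sub>m X"
  define S where "S = (\<lambda>t::real. 1\<^sub>m n - complex_of_real t \<cdot>\<^sub>m Y)"
  define W where "W = (\<lambda>t. (1 / det (S t)) \<cdot>\<^sub>m adj_mat (S t))"
  define M where "M = (\<lambda>t. W t * J * mat_adjoint (W t))"
  define D where "D = (\<lambda>t. X * M t - M t * X)"
  have Yc: "Y \<in> carrier_mat n n" using X_carrier by (simp add: Y_def)
  have ofr: "continuous (at (0::real)) (\<lambda>t. complex_of_real t)" by (intro continuous_intros)
  have Sc: "mcont S n n" unfolding S_def
    by (rule mcont_minus[OF mcont_const[OF one_carrier_mat] mcont_smult[OF ofr mcont_const[OF Yc]]])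
  have S0: "S 0 = 1\<^sub>m n" unfolding S_def by (rule eq_matI) (use Yc in auto)
  have detc: "continuous (at 0) (\<lambda>t. det (S t))" by (rule cont_det[OF Sc])
  have det0: "det (S 0) = 1" using S0 by simp
  have invc: "continuous (at 0) (\<lambda>t. 1 / det (S t))"
    using detc det0 by (intro isCont_divide continuous_const) auto
  have Wc: "mcont W n n" unfolding W_def by (rule mcont_smult[OF invc mcont_adj_mat[OF Sc]])
  have Mc: "mcont M n n" unfolding M_def
    by (rule mcont_mult[OF mcont_mult[OF Wc mcont_const[OF J_carrier]] mcont_adj[OF Wc]])
  have Dc: "mcont D n n" unfolding D_def
    by (rule mcont_minus[OF mcont_mult[OF mcont_const[OF X_carrier] Mc] mcont_mult[OF Mc mcont_const[OF X_carrier]]])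
  have SW: "S t * W t = 1\<^sub>m n \<and> W t * S t = 1\<^sub>m n" if d: "det (S t) \<noteq> 0" for t
  proof -
    have St: "S t \<in> carrier_mat n n" by (rule mcontD(1)[OF Sc])
    note adj = adj_mat[OF St]
    have "S t * W t = (1 / det (S t)) \<cdot>\<^sub>m (S t * adj_mat (S t))"
      unfolding W_def by (rule mult_smult_distrib[OF St adj(1)])
    also have "\<dots> = 1\<^sub>m n" using adj(2) d by (simp add: smult_smult_mat' one_smult_mat')
    finally have 1: "S t * W t = 1\<^sub>m n" .
    have "W t * S t = (1 / det (S t)) \<cdot>\<^sub>m (adj_mat (S t) * S t)"
      unfolding W_def by (rule mult_smult_assoc_mat[OF adj(1) St])
    also have "\<dots> = 1\<^sub>m n" using adj(3) d by (simp add: smult_smult_mat' one_smult_mat')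
    finally show ?thesis using 1 by simp
  qed
  have W0: "W 0 = 1\<^sub>m n"
  proof -
    have "S 0 * W 0 = 1\<^sub>m n" using SW[of 0] det0 by simp
    then show ?thesis using S0 left_mult_one_mat[OF mcontD(1)[OF Wc, of 0]] by simp
  qed
  have D0: "D 0 = commutator X J"
    unfolding D_def M_def W0 commutator_def using J_carrier by simp
  have key: "det (x \<cdot>\<^sub>m 1\<^sub>m m - A_path ns (D t) path) \<in> \<real>"
    if t: "t \<noteq> 0" and d: "det (S t) \<noteq> 0" and x: "x \<in> \<real>" for t x
  proof -
    let ?c = "complex_of_real t"
    let ?g = "2 \<cdot>\<^sub>m W t - 1\<^sub>m n"
    have Wt: "W t \<in> carrier_mat n n" by (rule mcontD(1)[OF Wc])
    have SWt: "(1\<^sub>m n - ?c \<cdot>\<^sub>m ((1/2) \<cdot>\<^sub>m X)) * W t = 1\<^sub>m n"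
      "W t * (1\<^sub>m n - ?c \<cdot>\<^sub>m ((1/2) \<cdot>\<^sub>m X)) = 1\<^sub>m n"
      using SW[OF d] unfolding S_def Y_def by auto
    note cay = cayley[OF X_carrier Wt J_carrier X_skew _ SWt]
    have gc: "?g \<in> carrier_mat n n" using Wt by simp
    have gU: "?g \<in> unitary_group n" unfolding unitary_group_def using cay(1) gc by simp
    have gJ: "?g * J * mat_adjoint ?g = J + ?c \<cdot>\<^sub>m D t" using cay(2) unfolding D_def M_def by simp
    have Dt: "D t \<in> carrier_mat (sum_list ns) (sum_list ns)" using mcontD(1)[OF Dc] by (simp add: n_def)
    have sc: "A_path ns (J + ?c \<cdot>\<^sub>m D t) path = ?c ^ l \<cdot>\<^sub>m A_path ns (D t) path"
      unfolding l_def by (rule A_path_scale[OF J_blockdiag Jc Dt _ gp]) simp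
    let ?k = "?c ^ l"
    have kx: "?k * x \<in> \<real>" using x by (simp add: Reals_mult)
    have "det ((?k * x) \<cdot>\<^sub>m 1\<^sub>m m - ?k \<cdot>\<^sub>m A_path ns (D t) path) \<in> \<real>"
      using SA[OF gU kx] gJ sc by simp
    then have r: "?k ^ m * det (x \<cdot>\<^sub>m 1\<^sub>m m - A_path ns (D t) path) \<in> \<real>"
      using det_scale[OF AC[of "D t"]] by simp
    have k: "?k ^ m \<in> \<real>" "?k ^ m \<noteq> 0" using t by simp_all
    have "det (x \<cdot>\<^sub>m 1\<^sub>m m - A_path ns (D t) path) = (?k ^ m * det (x \<cdot>\<^sub>m 1\<^sub>m m - A_path ns (D t) path)) / ?k ^ m"
      using k(2) by simp
    also have "\<dots> \<in> \<real>" using r k(1) by (rule Reals_divide)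
    finally show ?thesis .
  qed
  have final: "poly (char_poly (A_path ns (commutator X J) path)) x \<in> \<real>" if x: "x \<in> \<real>" for x
  proof -
    define F where "F = (\<lambda>t. det (x \<cdot>\<^sub>m 1\<^sub>m m - A_path ns (D t) path))"
    have ADc: "mcont (\<lambda>t. A_path ns (D t) path) m m"
      using mcont_A_path[OF Dc[unfolded n_def] gp] path_closed by (simp add: m_def)
    have Fc: "continuous (at 0) F" unfolding F_def
      by (rule cont_det[OF mcont_minus[OF mcont_const[OF smult_carrier_mat[OF one_carrier_mat]] ADc]])
    have ev1: "eventually (\<lambda>t. det (S t) \<noteq> 0) (at 0)"
      using detc det0 unfolding continuous_at by (intro tendsto_imp_eventually_ne) auto
    have ev2: "eventually (\<lambda>t. t \<noteq> 0) (at (0::real))" by (simp add: eventually_at_filter)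
    have "eventually (\<lambda>t. F t \<in> \<real>) (at 0)"
      using eventually_conj[OF ev1 ev2] by (rule eventually_mono) (use key x in \<open>auto simp: F_def\<close>)
    then have "F 0 \<in> \<real>" by (rule real_lim0[OF Fc])
    then show ?thesis using D0 cp_eval[OF AC] by (simp add: F_def)
  qed
  have "real_poly (char_poly (A_path ns (commutator X J) path))"
    by (rule real_poly_from_values) (use final in blast)
  with nonreal show False by simp
qed


end
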